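(* Let $G=(V_1,V_2,E)$ be a bipartite graph with $n_1=|V_1|\ge1$, $n_2=|V_2|$, $n_2\ge n_1$, and $d=|E|$ edges, and let $n_2^{(\mathrm{odd})}\le n_2$ be the number of vertices of odd degree in $V_2$. Then there exists a collection of edge-disjoint simple cycles in $G$, each of length at most $2\lfloor 2\log_2(n_1)\rfloor$, whose union contains all but at most $\min\{2n_1+n_2,\ 4n_1+n_2^{(\mathrm{odd})}\}$ edges of $G$.
   Context: Graphs are finite and simple; the length of a cycle is its number of edges. *)

theory Defs
  imports Complex_Main
begin

definition bipartite_graph :: "'a set \<Rightarrow> 'a set \<Rightarrow> 'a set set \<Rightarrow> bool" where
  "bipartite_graph V1 V2 E \<longleftrightarrow> finite V1 \<and> finite V2 \<and> V1 \<inter> V2 = {} \<and>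
     (\<forall>e\<in>E. \<exists>u\<in>V1. \<exists>v\<in>V2. e = {u, v})"

definition degree :: "'a set set \<Rightarrow> 'a \<Rightarrow> nat" where
  "degree E v = card {e \<in> E. v \<in> e}"

definition cycle_edges :: "'a list \<Rightarrow> 'a set set" where
  "cycle_edges vs = {{vs ! i, vs ! ((i + 1) mod length vs)} | i. i < length vs}"

definition is_simple_cycle :: "'a set set \<Rightarrow> 'a list \<Rightarrow> bool" where
  "is_simple_cycle E vs \<longleftrightarrow> length vs \<ge> 3 \<and> distinct vs \<and> cycle_edges vs \<subseteq> E"

end

theory Submission
  imports Defs
begin


definition wpath :: "'a set set \<Rightarrow> 'a list \<Rightarrow> bool" where
  "wpath F p \<longleftrightarrow> p \<noteq> [] \<and> distinct p \<and> (\<forall>i. Suc i < length p \<longrightarrow> {p!i, p!Suc i} \<in> F)"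

lemma wpath_close:
  assumes "wpath F p" "i + 2 < length p" "{last p, p!i} \<in> F"
  shows "is_simple_cycle F (drop i p) \<and> length (drop i p) \<le> length p"
proof -
  have ne: "p \<noteq> []" and d: "distinct p" and ed: "\<And>j. Suc j < length p \<Longrightarrow> {p!j, p!Suc j} \<in> F"
    using assms(1) by (auto simp: wpath_def)
  have "cycle_edges (drop i p) \<subseteq> F"
  proof
    fix e assume "e \<in> cycle_edges (drop i p)"
    then obtain k where k: "k < length p - i" and e: "e = {drop i p ! k, drop i p ! ((k+1) mod (length p - i))}"
      by (auto simp: cycle_edges_def)
    show "e \<in> F"
    proof (cases "k + 1 < length p - i")
      case True
      then have "e = {p!(i+k), p!Suc(i+k)}" using e assms(2) by simp
      then show ?thesis using ed True by auto
    next
      case False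
      then have "k = length p - i - 1" using k by simp
      have "k + 1 = length p - i" using k False by simp
      then have m: "(k+1) mod (length p - i) = 0" by simp
      have "e = {p!(length p - 1), p!i}" using e assms(2) m \<open>k = length p - i - 1\<close> by simp
      then show ?thesis using assms(3) ne by (simp add: last_conv_nth)
    qed
  qed
  then show ?thesis using assms d by (simp add: is_simple_cycle_def)
qed

lemma wpath_snoc:
  assumes "wpath F p" "x \<notin> set p" "{last p, x} \<in> F"
  shows "wpath F (p @ [x])"
proof -
  have ne: "p \<noteq> []" and d: "distinct p" and ed: "\<And>j. Suc j < length p \<Longrightarrow> {p!j, p!Suc j} \<in> F"
    using assms(1) by (auto simp: wpath_def)
  have "{(p @ [x]) ! j, (p @ [x]) ! Suc j} \<in> F" if j: "Suc j < length (p @ [x])" for j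
  proof (cases "Suc j < length p")
    case True then show ?thesis using ed[OF True] by (simp add: nth_append)
  next
    case False then have jj: "j = length p - 1" using j by simp
    have "p ! j = last p" using ne jj by (simp add: last_conv_nth)
    moreover have "j < length p" "\<not> Suc j < length p" using jj ne False by auto
    ultimately show ?thesis using assms(3) by (simp add: nth_append)
  qed
  then show ?thesis using ne d assms(2) unfolding wpath_def by simp
qed

lemma wpath_butlast:
  assumes "wpath F (p @ [x])" "p \<noteq> []"
  shows "wpath F p" "{last p, x} \<in> F"
proof -
  have d: "distinct (p @ [x])" and ed: "\<And>j. Suc j < length (p @ [x]) \<Longrightarrow> {(p @ [x])!j, (p @ [x])!Suc j} \<in> F"
    using assms(1) by (auto simp: wpath_def)
  have "{p!j, p!Suc j} \<in> F" if "Suc j < length p" for j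
    using ed[of j] that by (simp add: nth_append)
  then show "wpath F p" using d assms(2) unfolding wpath_def by simp
  have "{(p@[x])!(length p - 1), (p@[x])!Suc (length p - 1)} \<in> F"
    using ed[of "length p - 1"] assms(2) by simp
  then show "{last p, x} \<in> F" using assms(2) by (simp add: nth_append last_conv_nth)
qed


lemma distinct_hd_last:
  assumes "distinct p" "p \<noteq> []" "hd p = last p"
  shows "p = [hd p]"
proof (cases p)
  case (Cons a t)
  show ?thesis
  proof (cases "t = []")
    case False
    then have "last p \<in> set t" using Cons by simp
    then show ?thesis using assms Cons by auto
  qed (use Cons in simp)
qed (use assms in simp)

lemma two_paths:
  "wpath F q \<Longrightarrow> wpath F p \<Longrightarrow> hd p = hd q \<Longrightarrow> last p = last q \<Longrightarrow> p \<noteq> q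
   \<Longrightarrow> \<exists>c. is_simple_cycle F c \<and> length c + 2 \<le> length p + length q"
proof (induction q arbitrary: p rule: rev_induct)
  case Nil
  then show ?case by (simp add: wpath_def)
next
  case (snoc z q')
  have pne: "p \<noteq> []" and pd: "distinct p" using snoc.prems by (auto simp: wpath_def)
  have qd: "distinct (q' @ [z])" using snoc.prems by (auto simp: wpath_def)
  show ?case
  proof (cases "q' = []")
    case True
    then have "hd p = last p" using snoc.prems by simp
    then have "p = [hd p]" using distinct_hd_last pne pd by blast
    moreover have "hd p = z" using \<open>hd p = last p\<close> snoc.prems(4) by simp
    ultimately have "p = q' @ [z]" using True by simp
    then show ?thesis using snoc.prems by simp
  next
    case False
    define b where "b = last q'"
    have wq: "wpath F q'" and bz: "{b, z} \<in> F" using wpath_butlast[OF snoc.prems(1) False] b_def by auto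
    have zq: "z \<notin> set q'" using qd by simp
    have bq: "b \<in> set q'" using False b_def by simp
    have lp: "last p = z" using snoc.prems by simp
    have hq: "hd q' = hd p" using snoc.prems False by simp
    show ?thesis
    proof (cases "b \<in> set p")
      case True
      then obtain i where i: "i < length p" "p ! i = b" by (auto simp: in_set_conv_nth)
      have "p ! (length p - 1) = z" using lp pne by (simp add: last_conv_nth)
      then have ine: "i \<noteq> length p - 1" using i zq bq by auto
      show ?thesis
      proof (cases "i + 2 < length p")
        case True
        have "{last p, p ! i} \<in> F" using bz lp i by (simp add: insert_commute)
        from wpath_close[OF snoc.prems(2) True this]
        have "is_simple_cycle F (drop i p) \<and> length (drop i p) \<le> length p" .
        moreover have "length q' \<ge> 1" using False by (cases q') auto
        ultimately have "is_simple_cycle F (drop i p) \<and> length (drop i p) + 2 \<le> length p + length (q' @ [z])"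
          by simp
        then show ?thesis by blast
      next
        case False
        then have ii: "i = length p - 2" using i ine by simp
        define p' where "p' = butlast p"
        have pp: "p = p' @ [z]" using pne lp p'_def by (metis append_butlast_last_id)
        have "length p \<ge> 2" using ii i ine by linarith
        then have p'ne: "p' \<noteq> []" using p'_def by (simp add: length_butlast flip: length_greater_0_conv)
        have wp': "wpath F p'" using wpath_butlast(1)[of F p' z] snoc.prems(2) pp p'ne by simp
        have "last p' = p ! i" using pp p'ne ii by (simp add: last_conv_nth nth_append)
        then have lp': "last p' = last q'" using i b_def by simp
        have hp': "hd p' = hd q'" using pp p'ne hq by simp
        have "p' \<noteq> q'" using pp snoc.prems(5) by auto
        from snoc.IH[OF wq wp' hp' lp' this] obtain c where
          "is_simple_cycle F c" "length c + 2 \<le> length p' + length q'" by blast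
        then show ?thesis using pp by auto
      qed
    next
      case False
      have wp: "wpath F (p @ [b])" using wpath_snoc[OF snoc.prems(2) False] bz lp by (simp add: insert_commute)
      have hp: "hd (p @ [b]) = hd q'" using pne hq by simp
      have lb: "last (p @ [b]) = last q'" using b_def by simp
      have "z \<in> set (p @ [b])" using lp pne last_in_set by fastforce
      then have "p @ [b] \<noteq> q'" using zq by auto
      from snoc.IH[OF wq wp hp lb this] obtain c where
        "is_simple_cycle F c" "length c + 2 \<le> length (p @ [b]) + length q'" by blast
      then show ?thesis by auto
    qed
  qed
qed



lemma pred_mod: "0 < j \<Longrightarrow> j < n \<Longrightarrow> (j + n - 1) mod n = j - (1::nat)"
proof -
  assume a: "0 < j" "j < n"
  have e: "j + n - 1 = (j - 1) + n" using a by simp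
  have "(j + n - 1) mod n = ((j - 1) + n) mod n" by (simp only: e)
  also have "\<dots> = (j - 1) mod n" by (rule mod_add_self2)
  also have "\<dots> = j - 1" using a by simp
  finally show ?thesis .
qed

lemma idx1: "j < n \<Longrightarrow> ((j + n - 1) mod n + 1) mod n = (j::nat)"
proof (cases "j = 0")
  case True
  assume "j < n" then show ?thesis using True by (cases n) auto
next
  case False
  assume jn: "j < n"
  have "(j + n - 1) mod n = j - 1" using jn False pred_mod by simp
  then show ?thesis using jn False by simp
qed

lemma idx2: "i < n \<Longrightarrow> (i + 1) mod n = j \<Longrightarrow> i = ((j::nat) + n - 1) mod n"
proof (cases "i + 1 < n")
  case True
  assume "(i + 1) mod n = j"
  then have "j = i + 1" using True by simp
  then have "j + n - 1 = i + n" by simp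
  then show ?thesis using \<open>j = i + 1\<close> True by simp
next
  case False
  assume "i < n" "(i + 1) mod n = j"
  then have "i + 1 = n" using False by simp
  then have "j = 0" using \<open>(i + 1) mod n = j\<close> by simp
  then show ?thesis using \<open>i + 1 = n\<close> by simp
qed

lemma idx3: "j < n \<Longrightarrow> 3 \<le> n \<Longrightarrow> ((j::nat) + 1) mod n \<noteq> j"
proof (cases "j + 1 < n")
  case False
  assume "j < n" "3 \<le> n"
  then have "j + 1 = n" using False by simp
  then show ?thesis using \<open>3 \<le> n\<close> by simp
qed simp

lemma idx4: "j < n \<Longrightarrow> 3 \<le> n \<Longrightarrow> ((j::nat) + 1) mod n \<noteq> (j + n - 1) mod n"
proof (cases "j = 0")
  case True
  assume "3 \<le> n" then show ?thesis using True by simp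
next
  case False
  assume jn: "j < n" "3 \<le> n"
  have a: "(j + n - 1) mod n = j - 1" using jn False pred_mod by simp
  show ?thesis
  proof (cases "j + 1 < n")
    case True then show ?thesis using a False by simp
  next
    case False
    then have "j + 1 = n" using jn by simp
    then show ?thesis using a jn by simp
  qed
qed

lemma idx5: "j < n \<Longrightarrow> 3 \<le> n \<Longrightarrow> ((j::nat) + n - 1) mod n \<noteq> j"
proof (cases "j = 0")
  case True
  assume "3 \<le> n" then show ?thesis using True by simp
next
  case False
  assume jn: "j < n" "3 \<le> n"
  have a: "(j + n - 1) mod n = j - 1" using jn False pred_mod by simp
  then show ?thesis using False by simp
qed

lemma cycle_deg_even:
  assumes "is_simple_cycle F c"
  shows "even (card {e \<in> cycle_edges c. v \<in> e})"
proof -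
  define n where "n = length c"
  have n3: "3 \<le> n" and d: "distinct c" using assms by (auto simp: is_simple_cycle_def n_def)
  define ed where "ed i = {c!i, c!((i+1) mod n)}" for i
  have ce: "cycle_edges c = ed ` {..<n}" by (auto simp: cycle_edges_def ed_def n_def)
  show ?thesis
  proof (cases "v \<in> set c")
    case False
    have emp: "{e \<in> cycle_edges c. v \<in> e} = {}"
    proof -
      have "v \<notin> ed i" if "i < n" for i
      proof -
        have "(i+1) mod n < n" using n3 by simp
        then show ?thesis using False that by (auto simp: ed_def n_def)
      qed
      then show ?thesis using ce by auto
    qed
    show ?thesis unfolding emp by simp
  next
    case True
    then obtain j where j: "j < n" "c ! j = v" by (auto simp: in_set_conv_nth n_def)
    define j' where "j' = (j + n - 1) mod n"
    have j'n: "j' < n" using n3 by (simp add: j'_def)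
    have a: "(j' + 1) mod n = j" using idx1 j unfolding j'_def by blast
    have "{e \<in> cycle_edges c. v \<in> e} = {ed j, ed j'}"
    proof
      show "{e \<in> cycle_edges c. v \<in> e} \<subseteq> {ed j, ed j'}"
      proof
        fix e assume "e \<in> {e \<in> cycle_edges c. v \<in> e}"
        then obtain i where i: "i < n" "e = ed i" "v \<in> ed i" using ce by auto
        have m: "(i+1) mod n < n" using n3 by simp
        show "e \<in> {ed j, ed j'}"
        proof (cases "v = c ! i")
          case True
          then have "i = j" using j i d by (simp add: nth_eq_iff_index_eq n_def)
          then show ?thesis using i by simp
        next
          case False
          then have "v = c ! ((i+1) mod n)" using i by (auto simp: ed_def)
          then have "(i+1) mod n = j" using j m d by (simp add: nth_eq_iff_index_eq n_def)
          then have "i = j'" using idx2 i unfolding j'_def by blast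
          then show ?thesis using i by simp
        qed
      qed
    next
      have "ed j \<in> cycle_edges c" "ed j' \<in> cycle_edges c" using ce j j'n by auto
      moreover have "v \<in> ed j" using j by (simp add: ed_def)
      moreover have "v \<in> ed j'" using j a by (simp add: ed_def)
      ultimately show "{ed j, ed j'} \<subseteq> {e \<in> cycle_edges c. v \<in> e}" by simp
    qed
    moreover have "ed j \<noteq> ed j'"
    proof
      assume eq: "ed j = ed j'"
      define b where "b = (j + 1) mod n"
      have bn: "b < n" using n3 by (simp add: b_def)
      have "c ! b \<in> ed j" by (simp add: ed_def b_def)
      then have "c ! b \<in> ed j'" using eq by simp
      moreover have "ed j' = {c ! j', c ! j}" using a by (simp add: ed_def)
      ultimately have "c ! b = c ! j' \<or> c ! b = c ! j" by simp
      moreover have "b \<noteq> j'" using idx4 j n3 by (simp add: b_def j'_def)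
      moreover have "b \<noteq> j" using idx3 j n3 by (simp add: b_def)
      moreover have "b < length c" "j' < length c" "j < length c" using bn j'n j by (auto simp: n_def)
      ultimately show False using d by (metis nth_eq_iff_index_eq)
    qed
    ultimately show ?thesis by simp
  qed
qed



lemma simple_cycle_mono: "is_simple_cycle F c \<Longrightarrow> F \<subseteq> G \<Longrightarrow> is_simple_cycle G c"
  by (auto simp: is_simple_cycle_def)

lemma cycle_edges_ne: assumes "is_simple_cycle F c" shows "cycle_edges c \<noteq> {}"
proof -
  have "3 \<le> length c" using assms by (simp add: is_simple_cycle_def)
  then have "0 < length c" by linarith
  then have "{c!0, c!((0+1) mod length c)} \<in> cycle_edges c" unfolding cycle_edges_def by blast
  then show ?thesis by blast
qed

lemma cycle_edges_sub: "is_simple_cycle F c \<Longrightarrow> cycle_edges c \<subseteq> F"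
  unfolding is_simple_cycle_def by auto

lemma cycle_removal:
  fixes M :: nat
  shows "finite F \<Longrightarrow> \<exists>C. finite C \<and> (\<forall>c\<in>C. is_simple_cycle F c \<and> length c \<le> M) \<and>
     (\<forall>c1\<in>C. \<forall>c2\<in>C. c1 \<noteq> c2 \<longrightarrow> cycle_edges c1 \<inter> cycle_edges c2 = {}) \<and>
     (\<forall>c. is_simple_cycle (F - \<Union>(cycle_edges ` C)) c \<longrightarrow> M < length c) \<and>
     (\<forall>v. even (degree F v) = even (degree (F - \<Union>(cycle_edges ` C)) v))"
proof (induction "card F" arbitrary: F rule: less_induct)
  case less
  show ?case
  proof (cases "\<exists>c. is_simple_cycle F c \<and> length c \<le> M")
    case False
    then show ?thesis by (intro exI[of _ "{}"]) auto
  next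
    case True
    then obtain c where c: "is_simple_cycle F c" "length c \<le> M" by blast
    define F' where "F' = F - cycle_edges c"
    have sub: "cycle_edges c \<subseteq> F" using cycle_edges_sub[OF c(1)] .
    have ne: "cycle_edges c \<noteq> {}" using cycle_edges_ne[OF c(1)] .
    have "F' \<subset> F" using sub ne unfolding F'_def by blast
    then have lt: "card F' < card F" using less.prems by (simp add: psubset_card_mono)
    have fF': "finite F'" using less.prems F'_def by simp
    from less.hyps[OF lt fF'] obtain C' where
      C'1: "finite C'" and C'2: "\<forall>c\<in>C'. is_simple_cycle F' c \<and> length c \<le> M"
      and C'3: "\<forall>c1\<in>C'. \<forall>c2\<in>C'. c1 \<noteq> c2 \<longrightarrow> cycle_edges c1 \<inter> cycle_edges c2 = {}"
      and C'4: "\<forall>c. is_simple_cycle (F' - \<Union>(cycle_edges ` C')) c \<longrightarrow> M < length c"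
      and C'5: "\<forall>v. even (degree F' v) = even (degree (F' - \<Union>(cycle_edges ` C')) v)"
      by blast
    have inF': "cycle_edges c' \<subseteq> F'" if "c' \<in> C'" for c'
      using C'2 that cycle_edges_sub by blast
    have disj: "cycle_edges c' \<inter> cycle_edges c = {}" if "c' \<in> C'" for c'
      using inF'[OF that] unfolding F'_def by blast
    have cnot: "c \<notin> C'" using disj ne by blast
    have R: "F - \<Union>(cycle_edges ` (insert c C')) = F' - \<Union>(cycle_edges ` C')"
      unfolding F'_def by blast
    have fc: "finite (cycle_edges c)" using sub less.prems finite_subset by blast
    have par: "even (degree F v) = even (degree F' v)" for v
    proof -
      have "{e \<in> F. v \<in> e} = {e \<in> F'. v \<in> e} \<union> {e \<in> cycle_edges c. v \<in> e}"
        using sub unfolding F'_def by blast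
      moreover have "finite {e \<in> F'. v \<in> e}" "finite {e \<in> cycle_edges c. v \<in> e}"
        using fF' fc by auto
      moreover have "{e \<in> F'. v \<in> e} \<inter> {e \<in> cycle_edges c. v \<in> e} = {}" unfolding F'_def by blast
      ultimately have "degree F v = degree F' v + card {e \<in> cycle_edges c. v \<in> e}"
        unfolding degree_def by (simp add: card_Un_disjoint)
      then show ?thesis using cycle_deg_even[OF c(1), of v] by simp
    qed
    show ?thesis
    proof (intro exI[of _ "insert c C'"] conjI)
      show "finite (insert c C')" using C'1 by simp
      show "\<forall>c\<in>insert c C'. is_simple_cycle F c \<and> length c \<le> M"
        using c C'2 simple_cycle_mono[of F' _ F] unfolding F'_def by blast
      show "\<forall>c1\<in>insert c C'. \<forall>c2\<in>insert c C'. c1 \<noteq> c2 \<longrightarrow> cycle_edges c1 \<inter> cycle_edges c2 = {}"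
        using C'3 disj by blast
      show "\<forall>c'. is_simple_cycle (F - \<Union>(cycle_edges ` (insert c C'))) c' \<longrightarrow> M < length c'"
        using C'4 R by simp
      show "\<forall>v. even (degree F v) = even (degree (F - \<Union>(cycle_edges ` (insert c C'))) v)"
        using C'5 R par by simp
    qed
  qed
qed



definition restr :: "'a set set \<Rightarrow> 'a set \<Rightarrow> 'a set set" where
  "restr R A = {e \<in> R. e \<inter> A \<noteq> {}}"

definition Sx :: "'a set set \<Rightarrow> 'a set \<Rightarrow> nat" where
  "Sx R V2 = (\<Sum>w\<in>V2. degree R w - 1)"

definition weight :: "'a set set \<Rightarrow> 'a set \<Rightarrow> 'a \<Rightarrow> nat" where
  "weight R V2 v = card {w \<in> V2. 2 \<le> degree R w \<and> {v, w} \<in> R}"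

lemma bip_edge:
  assumes "bipartite_graph V1 V2 R" "e \<in> R"
  obtains u w where "u \<in> V1" "w \<in> V2" "e = {u, w}"
  using assms unfolding bipartite_graph_def by blast

lemma bip_finite:
  assumes "bipartite_graph V1 V2 R"
  shows "finite R"
proof -
  have "R \<subseteq> Pow (V1 \<union> V2)"
  proof
    fix e assume "e \<in> R"
    then obtain u w where "u \<in> V1" "w \<in> V2" "e = {u, w}" using bip_edge[OF assms] by blast
    then show "e \<in> Pow (V1 \<union> V2)" by simp
  qed
  moreover have "finite (Pow (V1 \<union> V2))" using assms unfolding bipartite_graph_def by simp
  ultimately show ?thesis using finite_subset by blast
qed

lemma bip_restr_edge:
  assumes "bipartite_graph V1 V2 R" "A \<subseteq> V1" "e \<in> restr R A"
  obtains u w where "u \<in> A" "w \<in> V2" "e = {u, w}"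
proof -
  have eR: "e \<in> R" and eA: "e \<inter> A \<noteq> {}" using assms(3) by (auto simp: restr_def)
  obtain u w where u: "u \<in> V1" "w \<in> V2" "e = {u, w}" using bip_edge[OF assms(1) eR] by blast
  have dj: "V1 \<inter> V2 = {}" using assms(1) by (simp add: bipartite_graph_def)
  have "u \<in> A" using eA u assms(2) dj by auto
  then show ?thesis using that u by blast
qed

lemma deg_step:
  assumes bip: "bipartite_graph V1 V2 R" and A: "A \<subseteq> V1" and w: "w \<in> V2" and v: "v \<in> A"
  shows "degree (restr R A) w - 1 \<le> degree (restr R (A - {v})) w - 1 +
           (if 2 \<le> degree (restr R A) w \<and> {v, w} \<in> restr R A then 1 else 0)"
proof -
  define X where "X = {e \<in> restr R A. w \<in> e}"
  define Y where "Y = {e \<in> restr R (A - {v}). w \<in> e}"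
  have dj: "V1 \<inter> V2 = {}" using bip by (simp add: bipartite_graph_def)
  have fin: "finite R" using bip_finite[OF bip] .
  have fY: "finite Y" using fin unfolding Y_def restr_def by simp
  have XY: "X \<subseteq> Y \<union> ({{v, w}} \<inter> restr R A)"
  proof
    fix e assume "e \<in> X"
    then have eR: "e \<in> restr R A" and we: "w \<in> e" by (auto simp: X_def)
    obtain u w' where u: "u \<in> A" "w' \<in> V2" "e = {u, w'}" using bip_restr_edge[OF bip A eR] by blast
    have "u \<noteq> w" using u A w dj by auto
    then have "w' = w" using we u by auto
    show "e \<in> Y \<union> ({{v, w}} \<inter> restr R A)"
    proof (cases "u = v")
      case True then show ?thesis using u \<open>w' = w\<close> eR by simp
    next
      case False
      have "u \<notin> V2" using u A dj by auto
      then have "e \<inter> (A - {v}) \<noteq> {}" using u False by auto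
      then have "e \<in> restr R (A - {v})" using eR by (simp add: restr_def)
      then show ?thesis using we by (simp add: Y_def)
    qed
  qed
  have "card X \<le> card (Y \<union> ({{v, w}} \<inter> restr R A))" using XY fY by (simp add: card_mono)
  also have "\<dots> \<le> card Y + card ({{v, w}} \<inter> restr R A)" by (rule card_Un_le)
  finally have cX: "card X \<le> card Y + card ({{v, w}} \<inter> restr R A)" .
  have dX: "degree (restr R A) w = card X" by (simp add: degree_def X_def)
  have dY: "degree (restr R (A - {v})) w = card Y" by (simp add: degree_def Y_def)
  show ?thesis
  proof (cases "{v, w} \<in> restr R A")
    case True
    then have "{{v, w}} \<inter> restr R A = {{v, w}}" by blast
    then have "card X \<le> card Y + 1" using cX by simp
    then show ?thesis unfolding dX dY using True by (cases "2 \<le> card X") auto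
  next
    case False
    then have "{{v, w}} \<inter> restr R A = {}" by blast
    then have "card X \<le> card Y" using cX by simp
    then show ?thesis unfolding dX dY using False by simp
  qed
qed

lemma Sx_step:
  assumes bip: "bipartite_graph V1 V2 R" and A: "A \<subseteq> V1" and v: "v \<in> A"
  shows "Sx (restr R A) V2 \<le> Sx (restr R (A - {v})) V2 + weight (restr R A) V2 v"
proof -
  have fV2: "finite V2" using bip by (simp add: bipartite_graph_def)
  have "Sx (restr R A) V2 \<le> (\<Sum>w\<in>V2. (degree (restr R (A - {v})) w - 1) +
           (if 2 \<le> degree (restr R A) w \<and> {v, w} \<in> restr R A then 1 else 0))"
    unfolding Sx_def by (rule sum_mono) (use deg_step[OF bip A _ v] in auto)
  also have "\<dots> = Sx (restr R (A - {v})) V2 +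
      (\<Sum>w\<in>V2. if 2 \<le> degree (restr R A) w \<and> {v, w} \<in> restr R A then 1 else 0)"
    unfolding Sx_def by (simp add: sum.distrib)
  also have "(\<Sum>w\<in>V2. if 2 \<le> degree (restr R A) w \<and> {v, w} \<in> restr R A then 1 else 0)
      = weight (restr R A) V2 v"
    unfolding weight_def using fV2 by (simp add: sum.If_cases Int_def)
  finally show ?thesis .
qed

lemma prune:
  assumes bip: "bipartite_graph V1 V2 R"
  shows "A \<subseteq> V1 \<Longrightarrow> 2 * card A < Sx (restr R A) V2 \<Longrightarrow>
     \<exists>A'. A' \<subseteq> A \<and> A' \<noteq> {} \<and> (\<forall>v\<in>A'. 3 \<le> weight (restr R A') V2 v)"
proof (induction "card A" arbitrary: A rule: less_induct)
  case less
  have fA: "finite A" using less.prems(1) bip finite_subset by (auto simp: bipartite_graph_def)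
  show ?case
  proof (cases "A = {}")
    case True
    then have "restr R A = {}" by (simp add: restr_def)
    then have "Sx (restr R A) V2 = 0" by (simp add: Sx_def degree_def)
    then show ?thesis using less.prems by simp
  next
    case ne: False
    show ?thesis
    proof (cases "\<forall>v\<in>A. 3 \<le> weight (restr R A) V2 v")
      case True then show ?thesis using ne by blast
    next
      case False
      then obtain v where v: "v \<in> A" "weight (restr R A) V2 v \<le> 2" by force
      have "0 < card A" using v fA card_gt_0_iff by blast
      then have lt: "card (A - {v}) < card A" using v fA by simp
      have cA: "card (A - {v}) + 1 = card A" using v fA \<open>0 < card A\<close> by simp
      have "Sx (restr R A) V2 \<le> Sx (restr R (A - {v})) V2 + 2"
        using Sx_step[OF bip less.prems(1) v(1)] v(2) by linarith
      then have "2 * card (A - {v}) < Sx (restr R (A - {v})) V2" using less.prems(2) cA by linarith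
      from less.hyps[OF lt _ this] less.prems(1) obtain A' where
        "A' \<subseteq> A - {v}" "A' \<noteq> {}" "\<forall>v\<in>A'. 3 \<le> weight (restr R A') V2 v" by blast
      then show ?thesis by blast
    qed
  qed
qed



definition Qs :: "'a set set \<Rightarrow> 'a set \<Rightarrow> 'a set \<Rightarrow> 'a \<Rightarrow> nat \<Rightarrow> 'a list set" where
  "Qs F A V2 r k = {p. wpath F p \<and> hd p = r \<and> length p = 2*k+1 \<and>
     (\<forall>i<length p. (even i \<longrightarrow> p!i \<in> A) \<and> (odd i \<longrightarrow> p!i \<in> V2))}"

context
  fixes F :: "'a set set" and A V2 :: "'a set" and r :: 'a and K :: nat
  assumes Fe: "\<forall>e\<in>F. \<exists>u\<in>A. \<exists>w\<in>V2. e = {u, w}"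
    and dj: "A \<inter> V2 = {}"
    and wt: "\<forall>v\<in>A. 3 \<le> card {w \<in> V2. 2 \<le> degree F w \<and> {v, w} \<in> F}"
    and fF: "finite F" and fA: "finite A" and fV2: "finite V2"
    and nocyc: "\<forall>c. is_simple_cycle F c \<longrightarrow> 4 * K < length c"
    and rA: "r \<in> A"
begin

lemma other_nb:
  assumes w: "w \<in> V2" "2 \<le> degree F w"
  shows "\<exists>u\<in>A. u \<noteq> v \<and> {u, w} \<in> F"
proof -
  define X where "X = {e \<in> F. w \<in> e}"
  have "\<not> X \<subseteq> {{v, w}}"
  proof
    assume "X \<subseteq> {{v, w}}"
    then have "card X \<le> 1" using card_mono[of "{{v, w}}" X] by simp
    then show False using w(2) unfolding degree_def X_def by simp
  qed
  then obtain e where e: "e \<in> F" "w \<in> e" "e \<noteq> {v, w}" unfolding X_def by blast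
  obtain u w' where u: "u \<in> A" "w' \<in> V2" "e = {u, w'}" using Fe e(1) by blast
  have "u \<noteq> w" using u w dj by auto
  then have "w' = w" using u e(2) by auto
  then show ?thesis using u e by auto
qed

lemma Qs_finite: "finite (Qs F A V2 r k)"
proof -
  have "Qs F A V2 r k \<subseteq> {p. set p \<subseteq> A \<union> V2 \<and> length p = 2*k+1}"
  proof
    fix p assume p: "p \<in> Qs F A V2 r k"
    have "set p \<subseteq> A \<union> V2"
    proof
      fix x assume "x \<in> set p"
      then obtain i where "i < length p" "p ! i = x" by (auto simp: in_set_conv_nth)
      then show "x \<in> A \<union> V2" using p unfolding Qs_def by (cases "even i") auto
    qed
    then show "p \<in> {p. set p \<subseteq> A \<union> V2 \<and> length p = 2*k+1}" using p by (simp add: Qs_def)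
  qed
  moreover have "finite {p. set p \<subseteq> A \<union> V2 \<and> length p = 2*k+1}"
    using fA fV2 by (intro finite_lists_length_eq) simp
  ultimately show ?thesis using finite_subset by blast
qed

lemma Qs_zero: "Qs F A V2 r 0 = {[r]}"
proof
  show "Qs F A V2 r 0 \<subseteq> {[r]}"
  proof
    fix p assume p: "p \<in> Qs F A V2 r 0"
    then have "length p = 1" "hd p = r" by (auto simp: Qs_def)
    then show "p \<in> {[r]}" by (cases p) auto
  qed
  show "{[r]} \<subseteq> Qs F A V2 r 0" using rA by (simp add: Qs_def wpath_def)
qed

lemma ext_card:
  assumes kK: "k < K" and p: "p \<in> Qs F A V2 r k"
  shows "(if k = 0 then 3 else 2) \<le> card {q \<in> Qs F A V2 r (Suc k). take (2*k+1) q = p}"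
proof -
  have wp: "wpath F p" and hp: "hd p = r" and lp: "length p = 2*k+1"
    and par: "\<And>i. i < length p \<Longrightarrow> (even i \<longrightarrow> p!i \<in> A) \<and> (odd i \<longrightarrow> p!i \<in> V2)"
    using p by (auto simp: Qs_def)
  have pne: "p \<noteq> []" using lp by auto
  define v where "v = last p"
  have vp: "v = p ! (2*k)" using pne lp by (simp add: v_def last_conv_nth)
  have vA: "v \<in> A" using par[of "2*k"] lp vp by simp
  define Wv where "Wv = {w \<in> V2. 2 \<le> degree F w \<and> {v, w} \<in> F}"
  have cWv: "3 \<le> card Wv" using wt vA by (simp add: Wv_def)
  have fWv: "finite Wv" using fV2 by (simp add: Wv_def)
  define W where "W = Wv - set p"
  have sub: "Wv \<inter> set p \<subseteq> (if k = 0 then {} else {p ! (2*k - 1)})"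
  proof
    fix w assume w: "w \<in> Wv \<inter> set p"
    then obtain i where i: "i < length p" "p ! i = w" by (auto simp: in_set_conv_nth)
    have wV2: "w \<in> V2" and vw: "{v, w} \<in> F" using w by (auto simp: Wv_def)
    have "i \<noteq> 2*k" using vp vA wV2 dj i by auto
    have "\<not> i + 2 < length p"
    proof
      assume "i + 2 < length p"
      moreover have "{last p, p ! i} \<in> F" using vw i v_def by simp
      ultimately have cy: "is_simple_cycle F (drop i p) \<and> length (drop i p) \<le> length p"
        using wpath_close[OF wp] by blast
      then have "length (drop i p) \<le> 4 * K" using lp kK by linarith
      then show False using nocyc cy by (meson not_le)
    qed
    then have "i = 2*k - 1" "k \<noteq> 0" using i lp \<open>i \<noteq> 2*k\<close> by auto
    then show "w \<in> (if k = 0 then {} else {p ! (2*k - 1)})" using i by simp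
  qed
  have "card (Wv \<inter> set p) \<le> (if k = 0 then 0 else 1)"
    using card_mono[OF _ sub] by (cases "k = 0") auto
  moreover have "card Wv = card W + card (Wv \<inter> set p)"
  proof -
    have "Wv = W \<union> (Wv \<inter> set p)" "W \<inter> (Wv \<inter> set p) = {}" by (auto simp: W_def)
    then show ?thesis using fWv by (metis card_Un_disjoint finite_Un)
  qed
  ultimately have cW: "(if k = 0 then 3 else 2) \<le> card W" using cWv by (cases "k = 0") auto
  have "\<forall>w\<in>W. \<exists>u. u \<in> A \<and> u \<noteq> v \<and> {u, w} \<in> F"
    using other_nb by (auto simp: W_def Wv_def)
  then obtain f where f: "\<And>w. w \<in> W \<Longrightarrow> f w \<in> A \<and> f w \<noteq> v \<and> {f w, w} \<in> F" by metis
  define g where "g w = p @ [w, f w]" for w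
  have gQ: "g w \<in> {q \<in> Qs F A V2 r (Suc k). take (2*k+1) q = p}" if w: "w \<in> W" for w
  proof -
    have wV2: "w \<in> V2" and vw: "{v, w} \<in> F" and wp': "w \<notin> set p" using w by (auto simp: W_def Wv_def)
    have fw: "f w \<in> A" "f w \<noteq> v" "{f w, w} \<in> F" using f[OF w] by auto
    have wp1: "wpath F (p @ [w])" using wpath_snoc[OF wp wp'] vw v_def by simp
    have fnw: "f w \<noteq> w" using fw(1) wV2 dj by auto
    have fnp: "f w \<notin> set p"
    proof
      assume "f w \<in> set p"
      then obtain i where i: "i < length p" "p ! i = f w" by (auto simp: in_set_conv_nth)
      have "i \<noteq> 2*k" using i vp fw(2) by auto
      then have i2: "i + 2 < length (p @ [w])" using i lp by simp
      have "{last (p @ [w]), (p @ [w]) ! i} \<in> F" using i fw(3) by (simp add: nth_append insert_commute)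
      then have cy: "is_simple_cycle F (drop i (p @ [w])) \<and> length (drop i (p @ [w])) \<le> length (p @ [w])"
        using wpath_close[OF wp1 i2] by blast
      then have "length (drop i (p @ [w])) \<le> 4 * K" using lp kK by simp
      then show False using nocyc cy by (meson not_le)
    qed
    have wp2: "wpath F ((p @ [w]) @ [f w])"
      using wpath_snoc[OF wp1] fnw fnp fw(3) by (simp add: insert_commute)
    have gw: "g w = (p @ [w]) @ [f w]" by (simp add: g_def)
    have parg: "(even i \<longrightarrow> g w ! i \<in> A) \<and> (odd i \<longrightarrow> g w ! i \<in> V2)" if ilt: "i < length (g w)" for i
    proof -
      consider "i < length p" | "i = length p" | "i = length p + 1" using ilt by (force simp: g_def)
      then show ?thesis
      proof cases
        case 1 then show ?thesis using par[of i] by (simp add: g_def nth_append)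
      next
        case 2 then show ?thesis using lp wV2 by (simp add: g_def nth_append)
      next
        case 3 then show ?thesis using lp fw(1) by (simp add: g_def nth_append)
      qed
    qed
    have "g w \<in> Qs F A V2 r (Suc k)"
      unfolding Qs_def using wp2 gw hp pne lp parg by (simp add: g_def)
    moreover have "take (2*k+1) (g w) = p" using lp by (simp add: g_def)
    ultimately show ?thesis by simp
  qed
  have inj: "inj_on g W"
  proof
    fix w1 w2 assume "w1 \<in> W" "w2 \<in> W" "g w1 = g w2"
    then have "g w1 ! length p = g w2 ! length p" by simp
    then show "w1 = w2" by (simp add: g_def nth_append)
  qed
  have fin: "finite {q \<in> Qs F A V2 r (Suc k). take (2*k+1) q = p}" using Qs_finite by simp
  have "card W = card (g ` W)" using inj by (simp add: card_image)
  also have "\<dots> \<le> card {q \<in> Qs F A V2 r (Suc k). take (2*k+1) q = p}"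
    using gQ fin by (intro card_mono) auto
  finally show ?thesis using cW by linarith
qed

lemma step_card:
  assumes kK: "k < K"
  shows "(if k = 0 then 3 else 2) * card (Qs F A V2 r k) \<le> card (Qs F A V2 r (Suc k))"
proof -
  define Ext where "Ext p = {q \<in> Qs F A V2 r (Suc k). take (2*k+1) q = p}" for p
  have "(if k = 0 then 3 else 2) * card (Qs F A V2 r k) \<le> (\<Sum>p\<in>Qs F A V2 r k. card (Ext p))"
    using ext_card[OF kK] sum_bounded_below[of "Qs F A V2 r k" "if k = 0 then 3 else 2" "\<lambda>p. card (Ext p)"]
    unfolding Ext_def by (simp add: mult.commute)
  also have "\<dots> = card (\<Union>p\<in>Qs F A V2 r k. Ext p)"
    by (rule card_UN_disjoint[symmetric]) (use Qs_finite in \<open>auto simp: Ext_def\<close>)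
  also have "\<dots> \<le> card (Qs F A V2 r (Suc k))"
    by (rule card_mono) (use Qs_finite in \<open>auto simp: Ext_def\<close>)
  finally show ?thesis .
qed

lemma layer_card: "1 \<le> k \<Longrightarrow> k \<le> K \<Longrightarrow> 3 * 2^(k-1) \<le> card (Qs F A V2 r k)"
proof (induction k)
  case 0 then show ?case by simp
next
  case (Suc k)
  show ?case
  proof (cases "k = 0")
    case True
    then show ?thesis using step_card[of 0] Suc.prems Qs_zero by simp
  next
    case False
    then have "3 * 2^(k-1) \<le> card (Qs F A V2 r k)" using Suc by simp
    moreover have "2 * card (Qs F A V2 r k) \<le> card (Qs F A V2 r (Suc k))"
      using step_card[of k] Suc.prems False by simp
    moreover have "(2::nat)^(Suc k - 1) = 2 * 2^(k-1)" using False by (cases k) auto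
    ultimately show ?thesis by simp
  qed
qed

lemma cardA2: "2 \<le> card A"
proof -
  define Wv where "Wv = {w \<in> V2. 2 \<le> degree F w \<and> {r, w} \<in> F}"
  have "3 \<le> card Wv" using wt rA by (simp add: Wv_def)
  then have "Wv \<noteq> {}" by auto
  then obtain w where w: "w \<in> V2" "2 \<le> degree F w" by (auto simp: Wv_def)
  obtain u where u: "u \<in> A" "u \<noteq> r" using other_nb[OF w, of r] by blast
  have "card {r, u} \<le> card A" using u rA fA by (intro card_mono) auto
  then show ?thesis using u by simp
qed

lemma moore_contra:
  assumes "card A < 2^(K+1)"
  shows False
proof -
  have K1: "1 \<le> K"
  proof (rule ccontr)
    assume "\<not> 1 \<le> K" then have "K = 0" by simp
    then show False using cardA2 assms by simp
  qed
  define P where "P = Qs F A V2 r K \<union> Qs F A V2 r (K - 1)"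
  have Pw: "wpath F p \<and> hd p = r \<and> length p \<le> 2*K+1 \<and> last p \<in> A" if pP: "p \<in> P" for p
  proof -
    obtain k where k: "k \<le> K" "p \<in> Qs F A V2 r k" using pP unfolding P_def by (metis diff_le_self Un_iff le_refl)
    then have lp: "length p = 2*k+1" and wp: "wpath F p" "hd p = r"
      and par: "\<And>i. i < length p \<Longrightarrow> (even i \<longrightarrow> p!i \<in> A)" by (auto simp: Qs_def)
    have pne: "p \<noteq> []" using lp by auto
    have "last p = p ! (2*k)" using pne lp by (simp add: last_conv_nth)
    then have "last p \<in> A" using par[of "2*k"] lp by simp
    then show ?thesis using wp lp k by simp
  qed
  have inj: "inj_on last P"
  proof
    fix p q assume pq: "p \<in> P" "q \<in> P" "last p = last q"
    show "p = q"
    proof (rule ccontr)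
      assume "p \<noteq> q"
      then obtain c where c: "is_simple_cycle F c" "length c + 2 \<le> length p + length q"
        using two_paths[of F q p] Pw[OF pq(1)] Pw[OF pq(2)] pq(3) by auto
      have "length p \<le> 2*K+1" "length q \<le> 2*K+1" using Pw[OF pq(1)] Pw[OF pq(2)] by auto
      then have "length c \<le> 4 * K" using c(2) by linarith
      then show False using nocyc c(1) by (meson not_le)
    qed
  qed
  have "card P \<le> card A"
  proof -
    have "card P = card (last ` P)" using inj by (simp add: card_image)
    also have "\<dots> \<le> card A" using Pw fA by (intro card_mono) auto
    finally show ?thesis .
  qed
  moreover have "card P = card (Qs F A V2 r K) + card (Qs F A V2 r (K - 1))"
  proof -
    have "Qs F A V2 r K \<inter> Qs F A V2 r (K - 1) = {}" using K1 by (auto simp: Qs_def)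
    then show ?thesis unfolding P_def using Qs_finite by (simp add: card_Un_disjoint)
  qed
  moreover have "2^(K+1) \<le> card (Qs F A V2 r K) + card (Qs F A V2 r (K - 1))"
  proof (cases "K = 1")
    case True
    then show ?thesis using layer_card[of 1] Qs_zero by simp
  next
    case False
    then have K2: "2 \<le> K" using K1 by simp
    have a: "3 * 2^(K-1) \<le> card (Qs F A V2 r K)" using layer_card[of K] K1 by simp
    have b: "3 * 2^(K-1-1) \<le> card (Qs F A V2 r (K - 1))" using layer_card[of "K-1"] K2 by simp
    define j where "j = K - 2"
    have Kj: "K = j + 2" using K2 j_def by simp
    have e1: "(2::nat)^(K+1) = 8 * 2^j" using Kj by (simp add: power_add)
    have e2: "(2::nat)^(K-1) = 2 * 2^j" using Kj by simp
    have e3: "(2::nat)^(K-1-1) = 2^j" using Kj by simp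
    show ?thesis using a b unfolding e1 e2 e3 by linarith
  qed
  ultimately show False using assms by linarith
qed

end



lemma restr_all:
  assumes "bipartite_graph V1 V2 R"
  shows "restr R V1 = R"
proof -
  have "e \<inter> V1 \<noteq> {}" if "e \<in> R" for e
    using bip_edge[OF assms that] by blast
  then show ?thesis unfolding restr_def by blast
qed

lemma key:
  assumes bip: "bipartite_graph V1 V2 R" and K: "card V1 < 2^(K+1)"
    and nc: "\<forall>c. is_simple_cycle R c \<longrightarrow> 4 * K < length c"
  shows "Sx R V2 \<le> 2 * card V1"
proof (rule ccontr)
  assume "\<not> Sx R V2 \<le> 2 * card V1"
  then have "2 * card V1 < Sx (restr R V1) V2" using restr_all[OF bip] by simp
  from prune[OF bip _ this] obtain A' where A': "A' \<subseteq> V1" "A' \<noteq> {}"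
    "\<forall>v\<in>A'. 3 \<le> weight (restr R A') V2 v" by blast
  then obtain r where r: "r \<in> A'" by blast
  have fin: "finite V1" "finite V2" "V1 \<inter> V2 = {}" using bip by (auto simp: bipartite_graph_def)
  have fA: "finite A'" using A'(1) fin finite_subset by blast
  have "card A' \<le> card V1" using A'(1) fin by (simp add: card_mono)
  then have cA: "card A' < 2^(K+1)" using K by linarith
  have Fe: "\<forall>e\<in>restr R A'. \<exists>u\<in>A'. \<exists>w\<in>V2. e = {u, w}"
    using bip_restr_edge[OF bip A'(1)] by metis
  have dj: "A' \<inter> V2 = {}" using A'(1) fin by blast
  have wt: "\<forall>v\<in>A'. 3 \<le> card {w \<in> V2. 2 \<le> degree (restr R A') w \<and> {v, w} \<in> restr R A'}"
    using A'(3) by (simp add: weight_def)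
  have fF: "finite (restr R A')" using bip_finite[OF bip] by (simp add: restr_def)
  have nc': "\<forall>c. is_simple_cycle (restr R A') c \<longrightarrow> 4 * K < length c"
    using nc simple_cycle_mono[of "restr R A'" _ R] by (auto simp: restr_def)
  show False using moore_contra[OF Fe dj wt fF fA fin(2) nc' r cA] .
qed

lemma card_edges_sum:
  assumes bip: "bipartite_graph V1 V2 R"
  shows "card R = (\<Sum>w\<in>V2. degree R w)"
proof -
  have fin: "finite R" "finite V2" "V1 \<inter> V2 = {}" using bip bip_finite[OF bip] by (auto simp: bipartite_graph_def)
  have "R = (\<Union>w\<in>V2. {e \<in> R. w \<in> e})"
  proof
    show "R \<subseteq> (\<Union>w\<in>V2. {e \<in> R. w \<in> e})"
    proof
      fix e assume "e \<in> R"
      then obtain u w where "u \<in> V1" "w \<in> V2" "e = {u, w}" using bip_edge[OF bip] by blast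
      then show "e \<in> (\<Union>w\<in>V2. {e \<in> R. w \<in> e})" using \<open>e \<in> R\<close> by blast
    qed
  qed blast
  then have "card R = card (\<Union>w\<in>V2. {e \<in> R. w \<in> e})" by simp
  also have "\<dots> = (\<Sum>w\<in>V2. card {e \<in> R. w \<in> e})"
  proof (rule card_UN_disjoint)
    show "finite V2" using fin by simp
    show "\<forall>i\<in>V2. finite {e \<in> R. i \<in> e}" using fin by simp
    show "\<forall>i\<in>V2. \<forall>j\<in>V2. i \<noteq> j \<longrightarrow> {e \<in> R. i \<in> e} \<inter> {e \<in> R. j \<in> e} = {}"
    proof (intro ballI impI)
      fix i j assume ij: "i \<in> V2" "j \<in> V2" "i \<noteq> j"
      show "{e \<in> R. i \<in> e} \<inter> {e \<in> R. j \<in> e} = {}"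
      proof (rule ccontr)
        assume "{e \<in> R. i \<in> e} \<inter> {e \<in> R. j \<in> e} \<noteq> {}"
        then obtain e where e: "e \<in> R" "i \<in> e" "j \<in> e" by blast
        then obtain u w where "u \<in> V1" "w \<in> V2" "e = {u, w}" using bip_edge[OF bip] by blast
        then show False using e ij fin(3) by auto
      qed
    qed
  qed
  finally show ?thesis by (simp add: degree_def)
qed

lemma log_bound:
  assumes "2^K \<le> n" "1 \<le> n"
  shows "2 * K \<le> nat \<lfloor>2 * log 2 (real n)\<rfloor>"
proof -
  have "real (2^K) \<le> real n" using assms(1) by linarith
  then have "log 2 (real (2^K)) \<le> log 2 (real n)" using assms(2) by (subst log_le_cancel_iff) auto
  moreover have "log 2 (real (2^K)) = real K" by (simp add: log_nat_power)
  ultimately have "real (2 * K) \<le> 2 * log 2 (real n)" by simp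
  then have "int (2 * K) \<le> \<lfloor>2 * log 2 (real n)\<rfloor>" by (simp add: le_floor_iff)
  then show ?thesis by linarith
qed

theorem lemmaA3:
  fixes V1 V2 :: "'a set" and E :: "'a set set"
  assumes "bipartite_graph V1 V2 E"
    and "card V1 \<ge> 1"
    and "card V2 \<ge> card V1"
  shows "\<exists>C :: 'a list set. finite C \<and>
     (\<forall>c\<in>C. is_simple_cycle E c \<and>
        length c \<le> 2 * nat \<lfloor>2 * log 2 (real (card V1))\<rfloor>) \<and>
     (\<forall>c1\<in>C. \<forall>c2\<in>C. c1 \<noteq> c2 \<longrightarrow> cycle_edges c1 \<inter> cycle_edges c2 = {}) \<and>
     card (E - \<Union>(cycle_edges ` C)) \<le>
       min (2 * card V1 + card V2) (4 * card V1 + card {v \<in> V2. odd (degree E v)})"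
proof -
  define M where "M = 2 * nat \<lfloor>2 * log 2 (real (card V1))\<rfloor>"
  have bip: "bipartite_graph V1 V2 E" by fact
  from cycle_removal[OF bip_finite[OF bip], of M] obtain C where
    C1: "finite C" and C2: "\<forall>c\<in>C. is_simple_cycle E c \<and> length c \<le> M"
    and C3: "\<forall>c1\<in>C. \<forall>c2\<in>C. c1 \<noteq> c2 \<longrightarrow> cycle_edges c1 \<inter> cycle_edges c2 = {}"
    and C4: "\<forall>c. is_simple_cycle (E - \<Union>(cycle_edges ` C)) c \<longrightarrow> M < length c"
    and C5: "\<forall>v. even (degree E v) = even (degree (E - \<Union>(cycle_edges ` C)) v)"
    by blast
  define R where "R = E - \<Union>(cycle_edges ` C)"
  have bipR: "bipartite_graph V1 V2 R" using bip unfolding R_def bipartite_graph_def by blast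
  obtain K where K: "2^K \<le> card V1" "card V1 < 2^(K+1)"
    using ex_power_ivl1[of 2 "card V1"] assms(2) by auto
  have "4 * K \<le> M" using log_bound[OF K(1) assms(2)] unfolding M_def by linarith
  then have nc: "\<forall>c. is_simple_cycle R c \<longrightarrow> 4 * K < length c" using C4 unfolding R_def by fastforce
  have S: "Sx R V2 \<le> 2 * card V1" using key[OF bipR K(2) nc] .
  have fV2: "finite V2" using bip by (simp add: bipartite_graph_def)
  have cR: "card R = (\<Sum>w\<in>V2. degree R w)" using card_edges_sum[OF bipR] .
  have b1: "card R \<le> card V2 + Sx R V2"
  proof -
    have "(\<Sum>w\<in>V2. degree R w) \<le> (\<Sum>w\<in>V2. 1 + (degree R w - 1))" by (rule sum_mono) simp
    also have "\<dots> = card V2 + Sx R V2" unfolding Sx_def sum.distrib by simp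
    finally show ?thesis using cR by simp
  qed
  have b2: "card R \<le> card {v \<in> V2. odd (degree E v)} + 2 * Sx R V2"
  proof -
    have "(\<Sum>w\<in>V2. degree R w) \<le> (\<Sum>w\<in>V2. (if degree R w = 1 then 1 else 0) + 2 * (degree R w - 1))"
      by (rule sum_mono) (simp; arith)
    also have "\<dots> = card {w \<in> V2. degree R w = 1} + 2 * Sx R V2"
      using fV2 by (simp add: sum.distrib Sx_def sum.If_cases sum_distrib_left Int_def)
    also have "card {w \<in> V2. degree R w = 1} \<le> card {v \<in> V2. odd (degree E v)}"
    proof (rule card_mono)
      show "finite {v \<in> V2. odd (degree E v)}" using fV2 by simp
      show "{w \<in> V2. degree R w = 1} \<subseteq> {v \<in> V2. odd (degree E v)}"
        using C5 unfolding R_def by auto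
    qed
    finally show ?thesis using cR by simp
  qed
  have "card R \<le> min (2 * card V1 + card V2) (4 * card V1 + card {v \<in> V2. odd (degree E v)})"
    using b1 b2 S by simp
  then show ?thesis using C1 C2 C3 unfolding R_def M_def by blast
qed


end
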